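(* For every $n\in\mathbb{N}$ there exists a strongly well-connected $3n$-regular oriented graph on $18n+5$ vertices with no Hamilton cycle.
   Context: An oriented graph has at most one edge between any two vertices; $d$-regular means every vertex has in- and outdegree exactly $d$. A digraph $G$ on at least four vertices is strongly well-connected if for every partition $(A,B)$ of $V(G)$ with $|A|,|B|\geq 2$ there exist two edges $ab$ and $cd$ with no common vertex such that $a,d\in A$ and $b,c\in B$. A Hamilton cycle is a directed cycle through all vertices. *)

theory Defs
  imports Main
begin

definition digraph :: "'a set \<Rightarrow> ('a \<times> 'a) set \<Rightarrow> bool" where
  "digraph V E \<longleftrightarrow> finite V \<and> E \<subseteq> V \<times> V"

definition oriented :: "'a set \<Rightarrow> ('a \<times> 'a) set \<Rightarrow> bool" where
  "oriented V E \<longleftrightarrow> digraph V E \<and> (\<forall>x. (x, x) \<notin> E) \<and> (\<forall>x y. (x, y) \<in> E \<longrightarrow> (y, x) \<notin> E)"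

definition outdeg :: "('a \<times> 'a) set \<Rightarrow> 'a \<Rightarrow> nat" where
  "outdeg E v = card {w. (v, w) \<in> E}"

definition indeg :: "('a \<times> 'a) set \<Rightarrow> 'a \<Rightarrow> nat" where
  "indeg E v = card {u. (u, v) \<in> E}"

definition regular :: "nat \<Rightarrow> 'a set \<Rightarrow> ('a \<times> 'a) set \<Rightarrow> bool" where
  "regular d V E \<longleftrightarrow> (\<forall>v\<in>V. indeg E v = d \<and> outdeg E v = d)"

definition strongly_well_connected :: "'a set \<Rightarrow> ('a \<times> 'a) set \<Rightarrow> bool" where
  "strongly_well_connected V E \<longleftrightarrow> card V \<ge> 4 \<and>
     (\<forall>A B. A \<union> B = V \<and> A \<inter> B = {} \<and> card A \<ge> 2 \<and> card B \<ge> 2 \<longrightarrow>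
        (\<exists>a b c d. (a, b) \<in> E \<and> (c, d) \<in> E \<and> a \<in> A \<and> d \<in> A \<and> b \<in> B \<and> c \<in> B
                   \<and> a \<noteq> c \<and> a \<noteq> d \<and> b \<noteq> c \<and> b \<noteq> d))"

definition hamilton_cycle :: "'a set \<Rightarrow> ('a \<times> 'a) set \<Rightarrow> 'a list \<Rightarrow> bool" where
  "hamilton_cycle V E vs \<longleftrightarrow> distinct vs \<and> set vs = V \<and> length vs \<ge> 2 \<and>
     (\<forall>i < length vs. (vs ! i, vs ! ((i + 1) mod length vs)) \<in> E)"

definition hamiltonian :: "'a set \<Rightarrow> ('a \<times> 'a) set \<Rightarrow> bool" where
  "hamiltonian V E \<longleftrightarrow> (\<exists>vs. hamilton_cycle V E vs)"

end

theory Submission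
  imports Defs "HOL-Library.Nat_Bijection"
begin


definition tour :: "nat \<Rightarrow> nat \<Rightarrow> nat \<Rightarrow> bool" where
  "tour k i j \<longleftrightarrow> (i < j \<and> j \<le> i + k) \<or> j + k < i"

definition Jout :: "nat \<Rightarrow> nat \<Rightarrow> nat set" where
  "Jout n i = {j. j \<le> 6*n \<and> tour (3*n) i j \<and> \<not>(i < 2*n \<and> j = i + 3*n)}"

definition Jin :: "nat \<Rightarrow> nat \<Rightarrow> nat set" where
  "Jin n j = {i. i \<le> 6*n \<and> tour (3*n) i j \<and> \<not>(i < 2*n \<and> j = i + 3*n)}"

lemma finite_Jout[simp]: "finite (Jout n i)"
  by (rule finite_subset[of _ "{..6*n}"]) (auto simp: Jout_def)

lemma finite_Jin[simp]: "finite (Jin n i)"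
  by (rule finite_subset[of _ "{..6*n}"]) (auto simp: Jin_def)

lemma card_Jout: assumes "i \<le> 6*n" shows "card (Jout n i) = (if i < 2*n then 3*n - 1 else 3*n)"
proof (cases "i < 2*n")
  case True
  then have "Jout n i = {i<..<i+3*n}" unfolding Jout_def tour_def by auto
  then show ?thesis using True by simp
next
  case False
  show ?thesis
  proof (cases "i \<le> 3*n")
    case True
    then have "Jout n i = {i<..i+3*n}" using False assms unfolding Jout_def tour_def by auto
    then show ?thesis using False by simp
  next
    case F2: False
    then have "Jout n i = {i<..6*n} \<union> {..<i-3*n}" using False assms unfolding Jout_def tour_def by auto
    moreover have "card ({i<..6*n} \<union> {..<i-3*n}) = (6*n - i) + (i - 3*n)"
      by (subst card_Un_disjoint) (use F2 in auto)
    ultimately show ?thesis using False F2 assms by simp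
  qed
qed

lemma card_Jin: assumes "j \<le> 6*n" shows "card (Jin n j) = (if 3*n \<le> j \<and> j < 5*n then 3*n - 1 else 3*n)"
proof (cases "3*n \<le> j")
  case True
  show ?thesis
  proof (cases "j < 5*n")
    case True2: True
    then have "Jin n j = {j-3*n<..<j}" using True unfolding Jin_def tour_def by auto
    then show ?thesis using True True2 by simp
  next
    case False
    then have "Jin n j = {j-3*n..<j}" using True assms unfolding Jin_def tour_def by auto
    then show ?thesis using True False by simp
  qed
next
  case False
  then have "Jin n j = {..<j} \<union> {j+3*n<..6*n}" using assms unfolding Jin_def tour_def by auto
  moreover have "card ({..<j} \<union> {j+3*n<..6*n}) = j + (6*n - (j+3*n))"
    by (subst card_Un_disjoint) (use False in auto)
  ultimately show ?thesis using False assms by simp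
qed

definition adj :: "nat \<Rightarrow> nat \<Rightarrow> nat \<Rightarrow> nat \<Rightarrow> nat \<Rightarrow> bool" where
  "adj n p i q j \<longleftrightarrow>
     (p < 3 \<and> q = p \<and> i \<le> 6*n \<and> j \<le> 6*n \<and> tour (3*n) i j \<and> \<not>(i < 2*n \<and> j = i + 3*n))
   \<or> (p < 3 \<and> i < n \<and> q = 3 \<and> j = 0)
   \<or> (p = 3 \<and> i = 0 \<and> q < 3 \<and> 3*n \<le> j \<and> j < 4*n)
   \<or> (p < 3 \<and> n \<le> i \<and> i < 2*n \<and> q = 3 \<and> j = 1)
   \<or> (p = 3 \<and> i = 1 \<and> q < 3 \<and> 4*n \<le> j \<and> j < 5*n)"

definition Vg :: "nat \<Rightarrow> (nat \<times> nat) set" where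
  "Vg n = {(p,i). p < 3 \<and> i \<le> 6*n} \<union> {(3,0),(3,1)}"

definition Eg :: "nat \<Rightarrow> ((nat \<times> nat) \<times> (nat \<times> nat)) set" where
  "Eg n = {((p,i),(q,j)). adj n p i q j}"

lemma Eg_iff[simp]: "((p,i),(q,j)) \<in> Eg n \<longleftrightarrow> adj n p i q j"
  by (simp add: Eg_def)

lemma card_Vg: "card (Vg n) = 18*n+5"
proof -
  have "{(p::nat,i::nat). p < 3 \<and> i \<le> 6*n} = {0..<3} \<times> {0..6*n}" by auto
  then have c: "card {(p::nat,i). p < 3 \<and> i \<le> 6*n} = 3*(6*n+1)" by (simp add: card_cartesian_product)
  have "Vg n = insert (3,0) (insert (3,1) {(p,i). p < 3 \<and> i \<le> 6*n})" unfolding Vg_def by auto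
  then show ?thesis using c by simp
qed

lemma finite_Vg: "finite (Vg n)"
proof -
  have "{(p::nat,i::nat). p < 3 \<and> i \<le> 6*n} = {0..<3} \<times> {0..6*n}" by auto
  then show ?thesis unfolding Vg_def by simp
qed

lemma Eg_sub: "Eg n \<subseteq> Vg n \<times> Vg n"
proof
  fix e assume "e \<in> Eg n"
  then obtain p i q j where e: "e = ((p,i),(q,j))" and a: "adj n p i q j" unfolding Eg_def by auto
  from a have "(p,i) \<in> Vg n \<and> (q,j) \<in> Vg n" unfolding adj_def Vg_def by auto
  then show "e \<in> Vg n \<times> Vg n" using e by auto
qed

lemma digraph_g: "digraph (Vg n) (Eg n)"
  unfolding digraph_def using finite_Vg Eg_sub by auto

lemma oriented_g: assumes "n \<ge> 1" shows "oriented (Vg n) (Eg n)"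
  unfolding oriented_def
proof (intro conjI allI impI digraph_g)
  fix x show "(x,x) \<notin> Eg n" by (cases x) (auto simp: adj_def tour_def)
next
  fix x y assume "(x,y) \<in> Eg n" then show "(y,x) \<notin> Eg n" using assms
    by (cases x; cases y) (auto simp: adj_def tour_def)
qed

lemma out_piece:
  assumes "p < 3" "i \<le> 6*n"
  shows "{w. ((p,i),w) \<in> Eg n} = Pair p ` Jout n i \<union> ((if i < n then {(3,0)} else {}) \<union> (if n \<le> i \<and> i < 2*n then {(3,1)} else {}))"
  using assms by (intro set_eqI, case_tac x) (auto simp: adj_def Jout_def)

lemma in_piece:
  assumes "p < 3" "j \<le> 6*n"
  shows "{w. (w,(p,j)) \<in> Eg n} = Pair p ` Jin n j \<union> ((if 3*n \<le> j \<and> j < 4*n then {(3,0)} else {}) \<union> (if 4*n \<le> j \<and> j < 5*n then {(3,1)} else {}))"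
  using assms by (intro set_eqI, case_tac x) (auto simp: adj_def Jin_def)

lemma outdeg_piece: assumes "n \<ge> 1" "p < 3" "i \<le> 6*n" shows "outdeg (Eg n) (p,i) = 3*n"
proof -
  have "card (Pair p ` Jout n i \<union> ((if i < n then {(3,0)} else {}) \<union> (if n \<le> i \<and> i < 2*n then {(3,1)} else {})))
     = card (Pair p ` Jout n i) + card ((if i < n then {(3::nat,0::nat)} else {}) \<union> (if n \<le> i \<and> i < 2*n then {(3,1)} else {}))"
    by (rule card_Un_disjoint) (use assms in auto)
  also have "card (Pair p ` Jout n i) = card (Jout n i)" by (simp add: card_image inj_on_def)
  finally show ?thesis unfolding outdeg_def using out_piece[OF assms(2,3)] card_Jout[OF assms(3)] assms by auto
qed

lemma indeg_piece: assumes "n \<ge> 1" "p < 3" "j \<le> 6*n" shows "indeg (Eg n) (p,j) = 3*n"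
proof -
  have "card (Pair p ` Jin n j \<union> ((if 3*n \<le> j \<and> j < 4*n then {(3,0)} else {}) \<union> (if 4*n \<le> j \<and> j < 5*n then {(3,1)} else {})))
     = card (Pair p ` Jin n j) + card ((if 3*n \<le> j \<and> j < 4*n then {(3::nat,0::nat)} else {}) \<union> (if 4*n \<le> j \<and> j < 5*n then {(3,1)} else {}))"
    by (rule card_Un_disjoint) (use assms in auto)
  also have "card (Pair p ` Jin n j) = card (Jin n j)" by (simp add: card_image inj_on_def)
  finally show ?thesis unfolding indeg_def using in_piece[OF assms(2,3)] card_Jin[OF assms(3)] assms by auto
qed

lemma deg_X:
  shows "outdeg (Eg n) (3,0) = 3*n" "indeg (Eg n) (3,0) = 3*n"
        "outdeg (Eg n) (3,1) = 3*n" "indeg (Eg n) (3,1) = 3*n"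
proof -
  have "{w. ((3,0),w) \<in> Eg n} = {0..<3} \<times> {3*n..<4*n}" by (rule set_eqI, case_tac x, auto simp: adj_def)
  then show "outdeg (Eg n) (3,0) = 3*n" unfolding outdeg_def by (simp add: card_cartesian_product)
  have "{w. (w,(3,0)) \<in> Eg n} = {0..<3} \<times> {0..<n}" by (rule set_eqI, case_tac x, auto simp: adj_def)
  then show "indeg (Eg n) (3,0) = 3*n" unfolding indeg_def by (simp add: card_cartesian_product)
  have "{w. ((3,1),w) \<in> Eg n} = {0..<3} \<times> {4*n..<5*n}" by (rule set_eqI, case_tac x, auto simp: adj_def)
  then show "outdeg (Eg n) (3,1) = 3*n" unfolding outdeg_def by (simp add: card_cartesian_product)
  have "{w. (w,(3,1)) \<in> Eg n} = {0..<3} \<times> {n..<2*n}" by (rule set_eqI, case_tac x, auto simp: adj_def)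
  then show "indeg (Eg n) (3,1) = 3*n" unfolding indeg_def by (simp add: card_cartesian_product)
qed

lemma regular_g: assumes "n \<ge> 1" shows "regular (3*n) (Vg n) (Eg n)"
  unfolding regular_def Vg_def using outdeg_piece[OF assms] indeg_piece[OF assms] deg_X by auto

lemma transition:
  assumes "i0 < length xs" "j0 < length xs" "Q (xs!i0)" "\<not> Q (xs!j0)"
  shows "\<exists>i<length xs. \<not> Q (xs!i) \<and> Q (xs!((i+1) mod length xs))"
proof (rule ccontr)
  assume H: "\<not> ?thesis"
  define L where "L = length xs"
  have L: "L > 0" using assms(1) L_def by auto
  have step: "\<And>i. i < L \<Longrightarrow> \<not> Q (xs!i) \<Longrightarrow> \<not> Q (xs!((i+1) mod L))" using H L_def by auto
  have "\<not> Q (xs!((j0+t) mod L))" for t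
  proof (induction t)
    case 0 show ?case using assms L_def by simp
  next
    case (Suc t)
    have e: "(j0 + Suc t) mod L = ((j0+t) mod L + 1) mod L"
      by (metis add_Suc_right mod_Suc_eq Suc_eq_plus1)
    have "(j0+t) mod L < L" using L by simp
    from step[OF this Suc] e show ?case by simp
  qed
  from this[of "i0 + L - j0"] have a: "\<not> Q (xs!((j0 + (i0 + L - j0)) mod L))" .
  have "j0 + (i0 + L - j0) = i0 + L" using assms(2) L_def by simp
  then have "(j0 + (i0 + L - j0)) mod L = i0" using assms(1) L_def by simp
  then show False using a assms(3) by simp
qed

lemma into_piece: "((q,j),(p,i)) \<in> Eg n \<Longrightarrow> p < 3 \<Longrightarrow> q \<noteq> p \<Longrightarrow> (q,j) \<in> {(3,0),(3,1)}"
  by (auto simp: adj_def)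

lemma not_ham: "\<not> hamiltonian (Vg n) (Eg n)"
proof
  assume "hamiltonian (Vg n) (Eg n)"
  then obtain vs where hc: "hamilton_cycle (Vg n) (Eg n) vs" unfolding hamiltonian_def by auto
  define L where "L = length vs"
  have dist: "distinct vs" and sv: "set vs = Vg n" and ed: "\<And>i. i < L \<Longrightarrow> (vs!i, vs!((i+1) mod L)) \<in> Eg n"
    using hc unfolding hamilton_cycle_def L_def by auto
  have X0: "(3,0) \<in> Vg n" by (simp add: Vg_def)
  then have L: "L > 0" using sv L_def by (metis length_pos_if_in_set)
  have ex: "\<exists>i<L. fst (vs!i) \<noteq> p \<and> fst (vs!((i+1) mod L)) = p" if p: "p < 3" for p
  proof -
    have "(p,0) \<in> Vg n" using p by (simp add: Vg_def)
    then have "(p,0) \<in> set vs" "(3,0) \<in> set vs" using sv X0 by auto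
    then obtain i0 j0 where "i0 < L" "vs!i0 = (p,0)" "j0 < L" "vs!j0 = (3,0)"
      unfolding L_def by (metis in_set_conv_nth)
    then show ?thesis using transition[of i0 vs j0 "\<lambda>x. fst x = p"] p unfolding L_def by auto
  qed
  then have "\<forall>p\<in>{..<3}. \<exists>i. i < L \<and> fst (vs!i) \<noteq> p \<and> fst (vs!((i+1) mod L)) = p" by auto
  then obtain g where g0: "\<forall>p\<in>{..<3}. g p < L \<and> fst (vs!(g p)) \<noteq> p \<and> fst (vs!((g p+1) mod L)) = p"
    by (rule bchoice[elim_format]) auto
  then have g: "\<And>p. p < 3 \<Longrightarrow> g p < L \<and> fst (vs!(g p)) \<noteq> p \<and> fst (vs!((g p+1) mod L)) = p"
    by auto
  have inX: "vs!(g p) \<in> {(3,0),(3,1)}" if p: "p < 3" for p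
  proof -
    obtain q j where qj: "vs!(g p) = (q,j)" by (cases "vs!(g p)")
    obtain i where pi: "vs!((g p+1) mod L) = (p,i)" using g[OF p] by (cases "vs!((g p+1) mod L)") auto
    have "((q,j),(p,i)) \<in> Eg n" using ed[of "g p"] g[OF p] qj pi by simp
    then show ?thesis using into_piece[of q j p i n] p g[OF p] qj by simp
  qed
  have inj: "inj_on (\<lambda>p. vs!(g p)) {0,1,2}"
  proof (rule inj_onI)
    fix p p' assume "p \<in> {0,1,2}" "p' \<in> {0::nat,1,2}" "vs!(g p) = vs!(g p')"
    then have "p < 3" "p' < 3" "vs!(g p) = vs!(g p')" by auto
    moreover have "g p < length vs" "g p' < length vs" using g \<open>p < 3\<close> \<open>p' < 3\<close> unfolding L_def by auto
    ultimately have "g p = g p'" using dist nth_eq_iff_index_eq by blast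
    then have "fst (vs!((g p+1) mod L)) = fst (vs!((g p'+1) mod L))" by simp
    then show "p = p'" using g[OF \<open>p < 3\<close>] g[OF \<open>p' < 3\<close>] by simp
  qed
  have "card {0::nat,1,2} \<le> card {(3::nat,0::nat),(3,1)}"
    by (rule card_inj_on_le[OF inj]) (use inX in auto)
  then show False by simp
qed



lemma card_out_A:
  assumes "finite V" "E \<subseteq> V \<times> V" "regular d V E" "A \<subseteq> V"
  shows "card {e\<in>E. fst e \<in> A} = d * card A"
proof -
  have fA: "finite A" using assms(1,4) finite_subset by auto
  have eq: "{e\<in>E. fst e \<in> A} = Sigma A (\<lambda>a. {w. (a,w) \<in> E})" by auto
  have fin: "\<forall>a\<in>A. finite {w. (a,w) \<in> E}"
  proof
    fix a show "finite {w. (a,w) \<in> E}" using assms(1,2) by (rule_tac finite_subset[of _ V]) auto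
  qed
  have "card {e\<in>E. fst e \<in> A} = (\<Sum>a\<in>A. card {w. (a,w) \<in> E})" unfolding eq
    using card_SigmaI[OF fA fin] .
  also have "\<dots> = (\<Sum>a\<in>A. d)"
    using assms(3,4) unfolding regular_def outdeg_def by (intro sum.cong) auto
  finally show ?thesis by simp
qed

lemma card_in_A:
  assumes "finite V" "E \<subseteq> V \<times> V" "regular d V E" "A \<subseteq> V"
  shows "card {e\<in>E. snd e \<in> A} = d * card A"
proof -
  have fA: "finite A" using assms(1,4) finite_subset by auto
  have eq: "{e\<in>E. snd e \<in> A} = (\<lambda>(x,y). (y,x)) ` Sigma A (\<lambda>a. {w. (w,a) \<in> E})" by force
  have fin: "\<forall>a\<in>A. finite {w. (w,a) \<in> E}"
  proof
    fix a show "finite {w. (w,a) \<in> E}" using assms(1,2) by (rule_tac finite_subset[of _ V]) auto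
  qed
  have inj: "inj_on (\<lambda>(x,y). (y,x)) X" for X :: "('a\<times>'a) set" by (auto simp: inj_on_def)
  have "card {e\<in>E. snd e \<in> A} = (\<Sum>a\<in>A. card {w. (w,a) \<in> E})" unfolding eq card_image[OF inj]
    using card_SigmaI[OF fA fin] .
  also have "\<dots> = (\<Sum>a\<in>A. d)"
    using assms(3,4) unfolding regular_def indeg_def by (intro sum.cong) auto
  finally show ?thesis by simp
qed

lemma balance:
  assumes "finite V" "E \<subseteq> V \<times> V" "regular d V E" "A \<subseteq> V"
  shows "card {e\<in>E. fst e \<in> A \<and> snd e \<notin> A} = card {e\<in>E. fst e \<notin> A \<and> snd e \<in> A}"
proof -
  have fE: "finite E" using assms(1,2) finite_subset by blast
  have "{e\<in>E. fst e \<in> A} = {e\<in>E. fst e \<in> A \<and> snd e \<in> A} \<union> {e\<in>E. fst e \<in> A \<and> snd e \<notin> A}" by auto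
  then have 1: "card {e\<in>E. fst e \<in> A} = card {e\<in>E. fst e \<in> A \<and> snd e \<in> A} + card {e\<in>E. fst e \<in> A \<and> snd e \<notin> A}"
    using fE by (simp add: card_Un_disjoint disjoint_iff)
  have "{e\<in>E. snd e \<in> A} = {e\<in>E. fst e \<in> A \<and> snd e \<in> A} \<union> {e\<in>E. fst e \<notin> A \<and> snd e \<in> A}" by auto
  then have 2: "card {e\<in>E. snd e \<in> A} = card {e\<in>E. fst e \<in> A \<and> snd e \<in> A} + card {e\<in>E. fst e \<notin> A \<and> snd e \<in> A}"
    using fE by (simp add: card_Un_disjoint disjoint_iff)
  show ?thesis using 1 2 card_out_A[OF assms] card_in_A[OF assms] by simp
qed

lemma failure:
  assumes H: "\<forall>f\<in>F. \<forall>r\<in>R. fst f = snd r \<or> snd f = fst r"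
    and nF: "\<And>x y. \<not> F \<subseteq> {x,y}" and nR: "\<And>x y. \<not> R \<subseteq> {x,y}"
  shows "\<exists>z. (\<forall>f\<in>F. fst f = z \<or> snd f = z) \<and> (\<forall>r\<in>R. fst r = z \<or> snd r = z)"
proof -
  obtain a b where ab: "(a,b) \<in> F" using nF by fastforce
  show ?thesis
  proof (cases "\<forall>r\<in>R. snd r = a")
    case True
    obtain r1 r2 where r: "r1 \<in> R" "r2 \<in> R" "r1 \<noteq> r2" using nR[of x x for x] nR by blast
    then have "fst r1 \<noteq> fst r2" using True by (metis prod.expand)
    then have "\<forall>f\<in>F. fst f = a" using H r True by metis
    then show ?thesis using True by blast
  next
    case F1: False
    show ?thesis
    proof (cases "\<forall>r\<in>R. fst r = b")
      case True
      obtain r1 r2 where r: "r1 \<in> R" "r2 \<in> R" "r1 \<noteq> r2" using nR by blast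
      then have "snd r1 \<noteq> snd r2" using True by (metis prod.expand)
      then have "\<forall>f\<in>F. snd f = b" using H r True by metis
      then show ?thesis using True by blast
    next
      case False
      then obtain r1 where r1: "r1 \<in> R" "fst r1 \<noteq> b" by blast
      obtain r2 where r2: "r2 \<in> R" "snd r2 \<noteq> a" using F1 by blast
      have "F \<subseteq> {(a,b), (snd r2, fst r1)}"
      proof
        fix f assume f: "f \<in> F"
        have 1: "fst (a,b) = snd r1 \<or> snd (a,b) = fst r1" using H ab r1 by blast
        have 2: "fst (a,b) = snd r2 \<or> snd (a,b) = fst r2" using H ab r2 by blast
        have 3: "fst f = snd r1 \<or> snd f = fst r1" using H f r1 by blast
        have 4: "fst f = snd r2 \<or> snd f = fst r2" using H f r2 by blast
        show "f \<in> {(a,b), (snd r2, fst r1)}" using 1 2 3 4 r1 r2 by (cases f) auto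
      qed
      then show ?thesis using nF by blast
    qed
  qed
qed



lemma tr_oriented: assumes "inj f" "oriented V E" shows "oriented (f ` V) (map_prod f f ` E)"
proof -
  have o: "finite V" "E \<subseteq> V \<times> V" "\<And>x. (x,x) \<notin> E" "\<And>x y. (x,y) \<in> E \<Longrightarrow> (y,x) \<notin> E"
    using assms(2) unfolding oriented_def digraph_def by auto
  show ?thesis  unfolding oriented_def digraph_def
  proof (intro conjI allI impI)
  show "finite (f ` V)" using o by simp
  show "map_prod f f ` E \<subseteq> f ` V \<times> f ` V" using o(2) by auto
  fix x show "(x,x) \<notin> map_prod f f ` E"
  proof
    assume "(x,x) \<in> map_prod f f ` E"
    then obtain a b where "(a,b) \<in> E" "f a = x" "f b = x" by auto
    then show False using o(3) assms(1) unfolding inj_def by metis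
  qed
next
  fix x y assume "(x,y) \<in> map_prod f f ` E"
  then obtain a b where ab: "(a,b) \<in> E" "f a = x" "f b = y" by auto
  show "(y,x) \<notin> map_prod f f ` E"
  proof
    assume "(y,x) \<in> map_prod f f ` E"
    then obtain c d where "(c,d) \<in> E" "f c = y" "f d = x" by auto
    then show False using o(4)[OF ab(1)] ab assms(1) unfolding inj_def by metis
  qed
  qed
qed

lemma tr_outset: assumes "inj f" shows "{w. (f v, w) \<in> map_prod f f ` E} = f ` {w. (v, w) \<in> E}"
  using assms unfolding inj_def by fastforce

lemma tr_inset: assumes "inj f" shows "{w. (w, f v) \<in> map_prod f f ` E} = f ` {w. (w, v) \<in> E}"
  using assms unfolding inj_def by fastforce

lemma tr_regular: assumes "inj f" "regular d V E" shows "regular d (f ` V) (map_prod f f ` E)"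
  unfolding regular_def
proof
  fix x assume "x \<in> f ` V"
  then obtain v where v: "v \<in> V" "x = f v" by auto
  have "indeg (map_prod f f ` E) x = indeg E v" unfolding indeg_def v(2) tr_inset[OF assms(1)]
    by (rule card_image) (meson assms(1) inj_on_subset subset_UNIV)
  moreover have "outdeg (map_prod f f ` E) x = outdeg E v" unfolding outdeg_def v(2) tr_outset[OF assms(1)]
    by (rule card_image) (meson assms(1) inj_on_subset subset_UNIV)
  ultimately show "indeg (map_prod f f ` E) x = d \<and> outdeg (map_prod f f ` E) x = d"
    using assms(2) v(1) unfolding regular_def by auto
qed

lemma tr_swc: assumes "inj f" "strongly_well_connected V E" shows "strongly_well_connected (f ` V) (map_prod f f ` E)"
  unfolding strongly_well_connected_def
proof (intro conjI allI impI)
  have inj: "inj_on f X" for X using assms(1) by (meson inj_on_subset subset_UNIV)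
  show "4 \<le> card (f ` V)" using assms(2) card_image[OF inj] unfolding strongly_well_connected_def by simp
  fix A B assume H: "A \<union> B = f ` V \<and> A \<inter> B = {} \<and> 2 \<le> card A \<and> 2 \<le> card B"
  define A' where "A' = V \<inter> f -` A"
  define B' where "B' = V \<inter> f -` B"
  have fA: "f ` A' = A"
  proof
    show "f ` A' \<subseteq> A" unfolding A'_def by auto
    show "A \<subseteq> f ` A'"
    proof
      fix x assume x: "x \<in> A"
      then have "x \<in> f ` V" using H by auto
      then obtain v where "v \<in> V" "x = f v" by auto
      then show "x \<in> f ` A'" using x unfolding A'_def by auto
    qed
  qed
  have fB: "f ` B' = B"
  proof
    show "f ` B' \<subseteq> B" unfolding B'_def by auto
    show "B \<subseteq> f ` B'"
    proof
      fix x assume x: "x \<in> B"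
      then have "x \<in> f ` V" using H by auto
      then obtain v where "v \<in> V" "x = f v" by auto
      then show "x \<in> f ` B'" using x unfolding B'_def by auto
    qed
  qed
  have P: "A' \<union> B' = V \<and> A' \<inter> B' = {} \<and> 2 \<le> card A' \<and> 2 \<le> card B'"
  proof -
    have "card A' = card A" "card B' = card B" using fA fB card_image[OF inj] by metis+
    moreover have "A' \<union> B' = V" "A' \<inter> B' = {}" using H unfolding A'_def B'_def by auto
    ultimately show ?thesis using H by simp
  qed
  have "\<forall>A B. A \<union> B = V \<and> A \<inter> B = {} \<and> card A \<ge> 2 \<and> card B \<ge> 2 \<longrightarrow>
        (\<exists>a b c d. (a, b) \<in> E \<and> (c, d) \<in> E \<and> a \<in> A \<and> d \<in> A \<and> b \<in> B \<and> c \<in> B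
                   \<and> a \<noteq> c \<and> a \<noteq> d \<and> b \<noteq> c \<and> b \<noteq> d)"
    using assms(2) unfolding strongly_well_connected_def by (elim conjE)
  from this[rule_format, OF P] obtain a b c d where w: "(a, b) \<in> E" "(c, d) \<in> E" "a \<in> A'" "d \<in> A'" "b \<in> B'" "c \<in> B'"
                   "a \<noteq> c" "a \<noteq> d" "b \<noteq> c" "b \<noteq> d"
    by blast
  have i: "\<And>x y. x \<noteq> y \<Longrightarrow> f x \<noteq> f y" using assms(1) unfolding inj_def by blast
  have "(f a, f b) \<in> map_prod f f ` E" "(f c, f d) \<in> map_prod f f ` E" using w(1,2) by auto
  moreover have "f a \<in> A" "f d \<in> A" "f b \<in> B" "f c \<in> B" using w(3-6) unfolding A'_def B'_def by auto
  moreover have "f a \<noteq> f c" "f a \<noteq> f d" "f b \<noteq> f c" "f b \<noteq> f d" using w(7-10) i by auto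
  ultimately show "\<exists>a b c d. (a, b) \<in> map_prod f f ` E \<and> (c, d) \<in> map_prod f f ` E \<and> a \<in> A \<and> d \<in> A \<and> b \<in> B \<and> c \<in> B
                   \<and> a \<noteq> c \<and> a \<noteq> d \<and> b \<noteq> c \<and> b \<noteq> d"
    apply - apply (rule exI[of _ "f a"], rule exI[of _ "f b"], rule exI[of _ "f c"], rule exI[of _ "f d"])
    by (intro conjI; assumption)
qed

lemma tr_ham: assumes "inj f" "\<not> hamiltonian V E" shows "\<not> hamiltonian (f ` V) (map_prod f f ` E)"
proof
  assume "hamiltonian (f ` V) (map_prod f f ` E)"
  then obtain vs where hc: "hamilton_cycle (f ` V) (map_prod f f ` E) vs" unfolding hamiltonian_def by auto
  define ws where "ws = map (inv f) vs"
  have inv: "inv f (f x) = x" for x using assms(1) by simp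
  have dv: "distinct vs" and sv: "set vs = f ` V" and lv: "length vs \<ge> 2"
    and ev: "\<forall>i<length vs. (vs ! i, vs ! ((i+1) mod length vs)) \<in> map_prod f f ` E"
    using hc unfolding hamilton_cycle_def by auto
  have vs: "vs = map f ws" unfolding ws_def map_map
    by (rule map_idI[symmetric]) (use sv in \<open>auto simp: f_inv_into_f\<close>)
  have len: "length ws = length vs" unfolding ws_def by simp
  have "distinct ws" using dv vs by (simp add: distinct_map)
  moreover have "set ws = V"
  proof -
    have "f ` set ws = f ` V" using sv vs by simp
    then show ?thesis using assms(1) by (simp add: inj_image_eq_iff)
  qed
  moreover have "\<forall>i<length ws. (ws ! i, ws ! ((i+1) mod length ws)) \<in> E"
  proof (intro allI impI)
    fix i assume i: "i < length ws"
    have m: "(i+1) mod length ws < length ws" by (rule mod_less_divisor) (use i in auto)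
    have "(f (ws ! i), f (ws ! ((i+1) mod length ws))) \<in> map_prod f f ` E"
      using ev i m len vs by (metis nth_map)
    then obtain a b where "(a,b) \<in> E" "f a = f (ws ! i)" "f b = f (ws ! ((i+1) mod length ws))" by auto
    then show "(ws ! i, ws ! ((i+1) mod length ws)) \<in> E" using assms(1) unfolding inj_def by metis
  qed
  ultimately have "hamilton_cycle V E ws" using lv len unfolding hamilton_cycle_def by auto
  then show False using assms(2) unfolding hamiltonian_def by auto
qed



definition W :: "('a\<times>'a) set \<Rightarrow> 'a set \<Rightarrow> 'a set \<Rightarrow> bool" where
  "W E A B \<longleftrightarrow> (\<exists>a b c d. (a, b) \<in> E \<and> (c, d) \<in> E \<and> a \<in> A \<and> d \<in> A \<and> b \<in> B \<and> c \<in> B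
                   \<and> a \<noteq> c \<and> a \<noteq> d \<and> b \<noteq> c \<and> b \<noteq> d)"

lemma W_sym: "W E A B \<Longrightarrow> W E B A"
  unfolding W_def by metis

definition partner :: "nat \<Rightarrow> nat \<Rightarrow> nat \<Rightarrow> bool" where
  "partner n i j \<longleftrightarrow> (i < 2*n \<and> j = i + 3*n) \<or> (j < 2*n \<and> i = j + 3*n)"

definition uadj :: "nat \<Rightarrow> nat\<times>nat \<Rightarrow> nat\<times>nat \<Rightarrow> bool" where
  "uadj n x y \<longleftrightarrow> (x,y) \<in> Eg n \<or> (y,x) \<in> Eg n"

lemma uadj_sym: "uadj n x y \<Longrightarrow> uadj n y x" unfolding uadj_def by auto

lemma piece_adj: "p < 3 \<Longrightarrow> i \<le> 6*n \<Longrightarrow> j \<le> 6*n \<Longrightarrow> i \<noteq> j \<Longrightarrow> \<not> partner n i j \<Longrightarrow> uadj n (p,i) (p,j)"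
  unfolding uadj_def partner_def by (auto simp: adj_def tour_def)

lemma partner_uniq: "partner n i j \<Longrightarrow> partner n i w \<Longrightarrow> j = w"
  unfolding partner_def by auto

lemma partner_uniq2: "partner n i j \<Longrightarrow> partner n w j \<Longrightarrow> i = w"
  unfolding partner_def by auto

lemma partner_sym: "partner n i j \<Longrightarrow> partner n j i"
  unfolding partner_def by auto

lemma u_adj: "n \<ge> 1 \<Longrightarrow> p < 3 \<Longrightarrow> uadj n (3,0) (p,0) \<and> uadj n (3,0) (p,3*n)"
  unfolding uadj_def by (auto simp: adj_def)

lemma v_adj: "n \<ge> 1 \<Longrightarrow> p < 3 \<Longrightarrow> uadj n (3,1) (p,n) \<and> uadj n (3,1) (p,4*n)"
  unfolding uadj_def by (auto simp: adj_def)

lemma Vg_cases: "x \<in> Vg n \<Longrightarrow> (\<exists>p i. x = (p,i) \<and> p < 3 \<and> i \<le> 6*n) \<or> x = (3,0) \<or> x = (3,1)"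
  unfolding Vg_def by auto

lemma in_Vg: "p < 3 \<Longrightarrow> i \<le> 6*n \<Longrightarrow> (p,i) \<in> Vg n" "(3,0) \<in> Vg n" "(3,1) \<in> Vg n"
  unfolding Vg_def by auto

lemma inner:
  assumes n: "n \<ge> 1" and P: "A \<union> B = Vg n" "A \<inter> B = {}"
    and q: "q < 3" "i \<le> 6*n" "j \<le> 6*n" and iA: "(q,i) \<in> A" and jB: "(q,j) \<in> B"
    and z: "(q,i) \<noteq> z" "(q,j) \<noteq> z"
  shows "\<exists>x\<in>A. \<exists>y\<in>B. uadj n x y \<and> x \<noteq> z \<and> y \<noteq> z"
proof (cases "partner n i j")
  case False
  have "i \<noteq> j" using iA jB P by auto
  then show ?thesis using piece_adj[OF q(1,2,3) _ False] iA jB z by blast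
next
  case True
  have "\<exists>w::nat. w < 4 \<and> w \<noteq> i \<and> w \<noteq> j \<and> w \<noteq> k" for k
  proof (rule ccontr)
    assume "\<not> ?thesis"
    then have H: "\<forall>w<4. w = i \<or> w = j \<or> w = k" by auto
    have "{0,1,2,3::nat} \<subseteq> {i,j,k}"
      using H[rule_format, of 0] H[rule_format, of 1] H[rule_format, of 2] H[rule_format, of 3] by auto
    from card_mono[OF _ this] have "card {0,1,2,3::nat} \<le> card {i,j,k}" by simp
    moreover have "card {i,j,k} \<le> 3" by (simp add: card_insert_le_m1)
    ultimately show False by simp
  qed
  then obtain w where w: "w < 4" "w \<noteq> i" "w \<noteq> j" "w \<noteq> snd z" by blast
  have wV: "(q,w) \<in> Vg n" using w n q by (intro in_Vg) auto
  have wz: "(q,w) \<noteq> z" using w by auto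
  have ni: "\<not> partner n i w" using partner_uniq[OF True] w by blast
  have nj: "\<not> partner n j w" using partner_uniq[OF partner_sym[OF True]] w by blast
  have a1: "uadj n (q,i) (q,w)" using piece_adj[OF q(1,2) _ _ ni] w n by auto
  have a2: "uadj n (q,w) (q,j)" using piece_adj[OF q(1,3) _ _ nj] w n uadj_sym by auto
  show ?thesis
  proof (cases "(q,w) \<in> A")
    case True then show ?thesis using a2 jB z wz by blast
  next
    case False then have "(q,w) \<in> B" using wV P by auto
    then show ?thesis using a1 iA z wz by blast
  qed
qed

lemma card2: assumes "2 \<le> card X" shows "\<exists>y\<in>X. y \<noteq> z"
proof (rule ccontr)
  assume "\<not> ?thesis"
  then have "X \<subseteq> {z}" by auto
  then have "card X \<le> 1" using card_mono[of "{z}" X] by simp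
  then show False using assms by simp
qed

lemma avoid1:
  assumes n: "n \<ge> 1" and P: "A \<union> B = Vg n" "A \<inter> B = {}" and cA: "card A \<ge> 2"
    and p: "p < 3" "i \<le> 6*n" "j \<le> 6*n" and iA: "(p,i) \<in> A" and jB: "(p,j) \<in> B"
  shows "\<exists>x\<in>A. \<exists>y\<in>B. uadj n x y \<and> x \<noteq> (p,i) \<and> y \<noteq> (p,i)"
proof (cases "\<exists>i'. i' \<le> 6*n \<and> i' \<noteq> i \<and> (p,i') \<in> A")
  case True
  then obtain i' where i': "i' \<le> 6*n" "i' \<noteq> i" "(p,i') \<in> A" by blast
  have "(p,j) \<noteq> (p,i)" using iA jB P by auto
  then show ?thesis using inner[OF n P p(1) i'(1) p(3) i'(3) jB] i'(2) by auto
next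
  case False
  then have Hall: "\<And>i'. i' \<le> 6*n \<Longrightarrow> i' \<noteq> i \<Longrightarrow> (p,i') \<in> B"
    using P in_Vg(1)[OF p(1)] by blast
  define w where "w = (if i = 0 then 3*n else 0)"
  have w: "w \<le> 6*n" "w \<noteq> i" "(p,w) \<in> B" "uadj n (3,0) (p,w)"
    using n Hall u_adj[OF n p(1)] unfolding w_def by auto
  define w' where "w' = (if i = n then 4*n else n)"
  have w': "w' \<le> 6*n" "w' \<noteq> i" "(p,w') \<in> B" "uadj n (3,1) (p,w')"
    using n Hall v_adj[OF n p(1)] unfolding w'_def by auto
  have une: "(3,0) \<noteq> (p,i)" "(3,1) \<noteq> (p,i)" "(p,w) \<noteq> (p,i)" "(p,w') \<noteq> (p,i)"
    using p w(2) w'(2) by auto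
  obtain y where y: "y \<in> A" "y \<noteq> (p,i)" using card2[OF cA] by blast
  then have yV: "y \<in> Vg n" using P by auto
  show ?thesis
  proof (cases "y = (3,0)")
    case True then show ?thesis using y w une by blast
  next
    case F0: False
    show ?thesis
    proof (cases "y = (3,1)")
      case True then show ?thesis using y w' une by blast
    next
      case False
      then obtain q i'' where q: "y = (q,i'')" "q < 3" "i'' \<le> 6*n" using Vg_cases[OF yV] F0 by blast
      have qp: "q \<noteq> p"
      proof
        assume "q = p"
        then have "(p,i'') \<in> B" using Hall q y by auto
        then show False using y q \<open>q = p\<close> P by auto
      qed
      show ?thesis
      proof (cases "\<exists>j'. j' \<le> 6*n \<and> (q,j') \<in> B")
        case True
        then obtain j' where j': "j' \<le> 6*n" "(q,j') \<in> B" by blast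
        show ?thesis using inner[OF n P q(2,3) j'(1) _ j'(2), of "(p,i)"] y q qp by auto
      next
        case False
        then have q0: "(q,0) \<in> A" using P in_Vg(1)[OF q(2), of 0] by auto
        show ?thesis
        proof (cases "(3,0) \<in> A")
          case True then show ?thesis using w une by blast
        next
          case False
          then have "(3,0) \<in> B" using P in_Vg(2) by auto
          moreover have "uadj n (q,0) (3,0)" using u_adj[OF n q(2)] uadj_sym by blast
          moreover have "(q,0) \<noteq> (p,i)" using qp by auto
          ultimately show ?thesis using q0 une by blast
        qed
      qed
    qed
  qed
qed

lemma avoid:
  assumes n: "n \<ge> 1" and P: "A \<union> B = Vg n" "A \<inter> B = {}" and cA: "card A \<ge> 2" and cB: "card B \<ge> 2"
    and p: "p < 3" "i \<le> 6*n" "j \<le> 6*n" and iA: "(p,i) \<in> A" and jB: "(p,j) \<in> B"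
  shows "\<exists>x\<in>A. \<exists>y\<in>B. uadj n x y \<and> x \<noteq> z \<and> y \<noteq> z"
proof -
  consider "(p,i) \<noteq> z \<and> (p,j) \<noteq> z" | "z = (p,i)" | "z = (p,j)" by blast
  then show ?thesis
  proof cases
    case 1 then show ?thesis using inner[OF n P p iA jB] by blast
  next
    case 2 then show ?thesis using avoid1[OF n P cA p iA jB] by blast
  next
    case 3
    have P': "B \<union> A = Vg n" "B \<inter> A = {}" using P by auto
    from avoid1[OF n P' cB p(1,3,2) jB iA] obtain x y where "x \<in> B" "y \<in> A" "uadj n x y" "x \<noteq> (p,j)" "y \<noteq> (p,j)"
      by blast
    then show ?thesis using 3 uadj_sym by blast
  qed
qed

lemma nosplit1:
  assumes n: "n \<ge> 1" and P: "A \<union> B = Vg n" "A \<inter> B = {}" and cA: "card A \<ge> 2" and cB: "card B \<ge> 2"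
    and ns: "\<And>p i j. p < 3 \<Longrightarrow> i \<le> 6*n \<Longrightarrow> j \<le> 6*n \<Longrightarrow> \<not> ((p,i) \<in> A \<and> (p,j) \<in> B)"
    and uA: "(3,0) \<in> A"
  shows "W (Eg n) A B"
proof -
  have pieceB: "(q,j') \<in> B" if "(q,j) \<in> B" "q < 3" "j \<le> 6*n" "j' \<le> 6*n" for q j j'
  proof -
    have "(q,j') \<in> Vg n" using that in_Vg by auto
    then show ?thesis using ns[of q j' j] that P by auto
  qed
  have pieceA: "(q,j') \<in> A" if "(q,j) \<in> A" "q < 3" "j \<le> 6*n" "j' \<le> 6*n" for q j j'
  proof -
    have "(q,j') \<in> Vg n" using that in_Vg by auto
    then show ?thesis using ns[of q j j'] that P by auto
  qed
  show ?thesis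
  proof (cases "(3,1) \<in> A")
    case True
    obtain y where y: "y \<in> B" "y \<noteq> (3,0)" using card2[OF cB] by blast
    have "y \<noteq> (3,1)" using y True P by auto
    then obtain q j where q: "y = (q,j)" "q < 3" "j \<le> 6*n" using Vg_cases[of y n] y P by blast
    have b: "(q,3*n) \<in> B" "(q,n) \<in> B" using pieceB[of q j] q y by auto
    have e: "((3,0),(q,3*n)) \<in> Eg n" "((q,n),(3,1)) \<in> Eg n" using n q by (auto simp: adj_def)
    show ?thesis unfolding W_def
      apply (rule exI[of _ "(3,0)"], rule exI[of _ "(q,3*n)"], rule exI[of _ "(q,n)"], rule exI[of _ "(3,1)"])
      using e b uA True n by simp
  next
    case False
    then have vB: "(3,1) \<in> B" using P in_Vg by auto
    obtain y where y: "y \<in> B" "y \<noteq> (3,1)" using card2[OF cB] by blast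
    have "y \<noteq> (3,0)" using y uA P by auto
    then obtain q j where q: "y = (q,j)" "q < 3" "j \<le> 6*n" using Vg_cases[of y n] y P by blast
    have b: "(q,3*n) \<in> B" using pieceB[of q j] q y by auto
    obtain y' where y': "y' \<in> A" "y' \<noteq> (3,0)" using card2[OF cA] by blast
    have "y' \<noteq> (3,1)" using y' vB P by auto
    then obtain p i where p: "y' = (p,i)" "p < 3" "i \<le> 6*n" using Vg_cases[of y' n] y' P by blast
    have a: "(p,4*n) \<in> A" using pieceA[of p i] p y' by auto
    have e: "((3,0),(q,3*n)) \<in> Eg n" "((3,1),(p,4*n)) \<in> Eg n" using n q p by (auto simp: adj_def)
    show ?thesis unfolding W_def
      apply (rule exI[of _ "(3,0)"], rule exI[of _ "(q,3*n)"], rule exI[of _ "(3,1)"], rule exI[of _ "(p,4*n)"])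
      using e a b uA vB n by simp
  qed
qed

lemma nosplit:
  assumes n: "n \<ge> 1" and P: "A \<union> B = Vg n" "A \<inter> B = {}" and cA: "card A \<ge> 2" and cB: "card B \<ge> 2"
    and ns: "\<And>p i j. p < 3 \<Longrightarrow> i \<le> 6*n \<Longrightarrow> j \<le> 6*n \<Longrightarrow> \<not> ((p,i) \<in> A \<and> (p,j) \<in> B)"
  shows "W (Eg n) A B"
proof (cases "(3,0) \<in> A")
  case True then show ?thesis using nosplit1[OF assms] by blast
next
  case False
  then have uB: "(3,0) \<in> B" using P in_Vg by auto
  have P': "B \<union> A = Vg n" "B \<inter> A = {}" using P by auto
  have ns': "\<And>p i j. p < 3 \<Longrightarrow> i \<le> 6*n \<Longrightarrow> j \<le> 6*n \<Longrightarrow> \<not> ((p,i) \<in> B \<and> (p,j) \<in> A)"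
    using ns by blast
  show ?thesis using W_sym[OF nosplit1[OF n P' cB cA ns' uB]] .
qed

lemma finite_Eg: "finite (Eg n)"
  using finite_subset[OF Eg_sub] finite_Vg by blast

lemma arith5:
  fixes s t pp np n :: nat
  assumes "n \<ge> 1" "s + t = 6*n+1" "s \<ge> 1" "t \<ge> 1" "np \<le> s" "np \<le> t" "pp + np = s*t"
  shows "pp \<ge> 5"
proof -
  consider "s = 1" | "t = 1" | "s \<ge> 2 \<and> t \<ge> 2 \<and> s \<le> t" | "s \<ge> 2 \<and> t \<ge> 2 \<and> t \<le> s" using assms by linarith
  then show ?thesis
  proof cases
    case 1 then show ?thesis using assms by simp
  next
    case 2 then show ?thesis using assms by simp
  next
    case 3
    then have "s*t \<ge> 2*t" by (simp add: mult_right_mono)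
    then have "pp + np \<ge> 2*t" using assms by simp
    moreover have "s \<le> 3*n"
    proof (rule ccontr)
      assume "\<not> s \<le> 3*n"
      then show False using assms 3 by linarith
    qed
    ultimately show ?thesis using assms(1-6) 3 by linarith
  next
    case 4
    then have "s*t \<ge> s*2" by (simp add: mult_left_mono)
    then have "pp + np \<ge> 2*s" using assms by simp
    moreover have "t \<le> 3*n"
    proof (rule ccontr)
      assume "\<not> t \<le> 3*n"
      then show False using assms 4 by linarith
    qed
    ultimately show ?thesis using assms(1-6) 4 by linarith
  qed
qed

lemma cut5:
  assumes n: "n \<ge> 1" and P: "A \<union> B = Vg n" "A \<inter> B = {}"
    and p: "p < 3" "i \<le> 6*n" "j \<le> 6*n" and iA: "(p,i) \<in> A" and jB: "(p,j) \<in> B"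
  shows "card ({e\<in>Eg n. fst e \<in> A \<and> snd e \<in> B} \<union> {e\<in>Eg n. fst e \<in> B \<and> snd e \<in> A}) \<ge> 5"
proof -
  define C where "C = {e\<in>Eg n. fst e \<in> A \<and> snd e \<in> B} \<union> {e\<in>Eg n. fst e \<in> B \<and> snd e \<in> A}"
  define S where "S = {i. i \<le> 6*n \<and> (p,i) \<in> A}"
  define T where "T = {j. j \<le> 6*n \<and> (p,j) \<in> B}"
  have fS: "finite S" and fT: "finite T" unfolding S_def T_def by auto
  have "S \<union> T = {..6*n}" using P in_Vg(1)[OF p(1)] unfolding S_def T_def by auto
  moreover have "S \<inter> T = {}" using P unfolding S_def T_def by auto
  ultimately have st: "card S + card T = 6*n+1" using fS fT card_Un_disjoint by fastforce
  have s1: "card S \<ge> 1" using fS iA p(2) unfolding S_def by (metis (mono_tags, lifting) One_nat_def Suc_leI card_gt_0_iff empty_iff mem_Collect_eq)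
  have t1: "card T \<ge> 1" using fT jB p(3) unfolding T_def by (metis (mono_tags, lifting) One_nat_def Suc_leI card_gt_0_iff empty_iff mem_Collect_eq)
  define NP where "NP = {x \<in> S \<times> T. partner n (fst x) (snd x)}"
  define PP where "PP = {x \<in> S \<times> T. \<not> partner n (fst x) (snd x)}"
  have "S \<times> T = PP \<union> NP" "PP \<inter> NP = {}" unfolding PP_def NP_def by auto
  then have c1: "card PP + card NP = card S * card T"
    using fS fT by (metis card_Un_disjoint card_cartesian_product finite_SigmaI finite_Un)
  have "inj_on fst NP" unfolding NP_def by (rule inj_onI) (auto dest: partner_uniq)
  then have c2: "card NP \<le> card S" by (rule card_inj_on_le[OF _ _ fS]) (auto simp: NP_def)
  have "inj_on snd NP" unfolding NP_def by (rule inj_onI) (auto dest: partner_uniq2)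
  then have c3: "card NP \<le> card T" by (rule card_inj_on_le[OF _ _ fT]) (auto simp: NP_def)
  have c4: "card PP \<ge> 5" using arith5[OF n st s1 t1 c2 c3 c1] .
  define g where "g x = (if ((p,fst x),(p,snd x)) \<in> Eg n then ((p,fst x),(p,snd x)) else ((p,snd x),(p,fst x)))" for x
  have gC: "g ` PP \<subseteq> C"
  proof
    fix e assume "e \<in> g ` PP"
    then obtain a b where ab: "(a,b) \<in> PP" "e = g (a,b)" by auto
    then have a: "a \<le> 6*n" "(p,a) \<in> A" "b \<le> 6*n" "(p,b) \<in> B" "\<not> partner n a b"
      unfolding PP_def S_def T_def by auto
    then have "a \<noteq> b" using P by auto
    then have "uadj n (p,a) (p,b)" using piece_adj[OF p(1)] a by blast
    then show "e \<in> C" using ab(2) a unfolding g_def C_def uadj_def by auto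
  qed
  have "inj_on g PP"
  proof (rule inj_onI)
    fix x y assume x: "x \<in> PP" and y: "y \<in> PP" and e: "g x = g y"
    have "(p, fst x) \<in> A" "(p, snd x) \<in> B" "(p, fst y) \<in> A" "(p, snd y) \<in> B"
      using x y unfolding PP_def S_def T_def by auto
    then have "fst x \<noteq> snd y" "snd x \<noteq> fst y" using P by auto
    then show "x = y" using e unfolding g_def by (auto split: if_splits simp: prod_eq_iff)
  qed
  then have "card PP \<le> card C"
    using card_inj_on_le[OF _ gC] finite_Eg unfolding C_def by auto
  then show ?thesis using c4 unfolding C_def by simp
qed

lemma swc_g: assumes n: "n \<ge> 1" shows "strongly_well_connected (Vg n) (Eg n)"
  unfolding strongly_well_connected_def
proof (intro conjI allI impI)
  show "4 \<le> card (Vg n)" using card_Vg by simp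
  fix A B assume H: "A \<union> B = Vg n \<and> A \<inter> B = {} \<and> 2 \<le> card A \<and> 2 \<le> card B"
  then have P: "A \<union> B = Vg n" "A \<inter> B = {}" and cA: "2 \<le> card A" and cB: "2 \<le> card B" by auto
  have "W (Eg n) A B"
  proof (rule ccontr)
    assume nW: "\<not> W (Eg n) A B"
    define F where "F = {e\<in>Eg n. fst e \<in> A \<and> snd e \<in> B}"
    define R where "R = {e\<in>Eg n. fst e \<in> B \<and> snd e \<in> A}"
    have Hfr: "\<forall>f\<in>F. \<forall>r\<in>R. fst f = snd r \<or> snd f = fst r"
    proof (intro ballI)
      fix f r assume f: "f \<in> F" and r: "r \<in> R"
      obtain a b c d where "f = (a,b)" "r = (c,d)" by (cases f, cases r)
      then have w: "(a,b) \<in> Eg n" "(c,d) \<in> Eg n" "a \<in> A" "b \<in> B" "c \<in> B" "d \<in> A" using f r unfolding F_def R_def by auto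
      then have "a \<noteq> c" "b \<noteq> d" using P by auto
      show "fst f = snd r \<or> snd f = fst r"
      proof (rule ccontr)
        assume "\<not> (fst f = snd r \<or> snd f = fst r)"
        then have "a \<noteq> d" "b \<noteq> c" using \<open>f = (a,b)\<close> \<open>r = (c,d)\<close> by auto
        then have "W (Eg n) A B" unfolding W_def using w \<open>a \<noteq> c\<close> \<open>b \<noteq> d\<close> by blast
        then show False using nW by simp
      qed
    qed
    show False
    proof (cases "\<exists>p i j. p < 3 \<and> i \<le> 6*n \<and> j \<le> 6*n \<and> (p,i) \<in> A \<and> (p,j) \<in> B")
      case True
      then obtain p i j where p: "p < 3" "i \<le> 6*n" "j \<le> 6*n" and iA: "(p,i) \<in> A" and jB: "(p,j) \<in> B" by blast
      have c5: "card (F \<union> R) \<ge> 5" using cut5[OF n P p iA jB] unfolding F_def R_def .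
      have fF: "finite F" and fR: "finite R" using finite_Eg unfolding F_def R_def by auto
      have "F \<inter> R = {}" using P unfolding F_def R_def by auto
      then have cFR: "card F + card R \<ge> 5" using c5 card_Un_disjoint[OF fF fR] by simp
      have AV: "A \<subseteq> Vg n" using P by auto
      have bal: "card {e\<in>Eg n. fst e \<in> A \<and> snd e \<notin> A} = card {e\<in>Eg n. fst e \<notin> A \<and> snd e \<in> A}"
        using balance[OF finite_Vg Eg_sub regular_g[OF n] AV] .
      have "{e\<in>Eg n. fst e \<in> A \<and> snd e \<notin> A} = F" using Eg_sub P unfolding F_def by fastforce
      moreover have "{e\<in>Eg n. fst e \<notin> A \<and> snd e \<in> A} = R" using Eg_sub P unfolding R_def by fastforce
      ultimately have "card F = card R" using bal by simp
      then have c3: "card F \<ge> 3" "card R \<ge> 3" using cFR by auto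
      have nF: "\<not> F \<subseteq> {x,y}" for x y
      proof
        assume "F \<subseteq> {x,y}"
        then have "card F \<le> card {x,y}" by (intro card_mono) auto
        also have "\<dots> \<le> 2" by (simp add: card_insert_le_m1)
        finally show False using c3 by simp
      qed
      have nR: "\<not> R \<subseteq> {x,y}" for x y
      proof
        assume "R \<subseteq> {x,y}"
        then have "card R \<le> card {x,y}" by (intro card_mono) auto
        also have "\<dots> \<le> 2" by (simp add: card_insert_le_m1)
        finally show False using c3 by simp
      qed
      obtain z where z: "\<forall>f\<in>F. fst f = z \<or> snd f = z" "\<forall>r\<in>R. fst r = z \<or> snd r = z"
        using failure[OF Hfr nF nR] by blast
      obtain x y where xy: "x \<in> A" "y \<in> B" "uadj n x y" "x \<noteq> z" "y \<noteq> z"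
        using avoid[OF n P cA cB p iA jB, of z] by blast
      show False
      proof (cases "(x,y) \<in> Eg n")
        case True
        then have "(x,y) \<in> F" using xy unfolding F_def by auto
        then show False using z xy by auto
      next
        case False
        then have "(y,x) \<in> Eg n" using xy unfolding uadj_def by auto
        then have "(y,x) \<in> R" using xy unfolding R_def by auto
        then show False using z xy by auto
      qed
    next
      case False
      then have "W (Eg n) A B" using nosplit[OF n P cA cB] by blast
      then show False using nW by simp
    qed
  qed
  then show "\<exists>a b c d. (a, b) \<in> Eg n \<and> (c, d) \<in> Eg n \<and> a \<in> A \<and> d \<in> A \<and> b \<in> B \<and> c \<in> B
                   \<and> a \<noteq> c \<and> a \<noteq> d \<and> b \<noteq> c \<and> b \<noteq> d" unfolding W_def .
qed


theorem proposition7p1: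
  fixes n :: nat
  assumes "n \<ge> 1"
  shows "\<exists>(V :: nat set) (E :: (nat \<times> nat) set).
           oriented V E \<and> card V = 18 * n + 5 \<and> regular (3 * n) V E \<and>
           strongly_well_connected V E \<and> \<not> hamiltonian V E"
proof -
  have inj: "inj prod_encode" by (rule inj_prod_encode)
  have c: "card (prod_encode ` Vg n) = 18 * n + 5"
    using card_image[OF inj_prod_encode[of "Vg n"]] card_Vg by simp
  show ?thesis
    apply (rule exI[of _ "prod_encode ` Vg n"], rule exI[of _ "map_prod prod_encode prod_encode ` Eg n"])
    using tr_oriented[OF inj oriented_g[OF assms]] c tr_regular[OF inj regular_g[OF assms]]
      tr_swc[OF inj swc_g[OF assms]] tr_ham[OF inj not_ham] by blast
qed

end
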